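(* Let $n \ge 1$ and $0 \le k \le n$ be integers, and let $A_0, A_1$ be real symmetric $n\times n$ matrices with $A_1$ positive definite. Consider the sparse QCQP $$\mathcal{Q}:\quad \max\ x^{\intercal}A_0x \quad\text{s.t.}\quad x^{\intercal}A_1x = 1,\ x\in\mathbb{R}^n,\ |\mathrm{supp}(x)|\le k.$$ Let $p$ be an LPM polynomial of degree $k$ with nonnegative coefficients, and let $g(t) = p(A_1 t - A_0)$. Then there exists a feasible point $x$ of $\mathcal{Q}$ whose objective value $x^{\intercal}A_0x$ is at least $\eta_g$. In particular, $\eta_g$ is a lower bound for the optimal value of $\mathcal{Q}$.
   Context: $\mathrm{supp}(x) = \{i\in[n] : x_i\neq 0\}$. For a symmetric matrix $X$ and $S\subseteq[n]$, $X|_S$ denotes the principal submatrix of $X$ indexed by $S$. An LPM (linear combination of principal minors) polynomial of degree $k$ is a polynomial in the entries of a symmetric $n\times n$ matrix $X$ that is not identically zero and has the form $p(X)=\sum_{S\subseteq[n],|S|=k} a_S\det(X|_S)$ for real coefficients $a_S$. For a univariate polynomial $g$, $\eta_g$ denotes the largest real root of $g$, or $-\infty$ if $g$ has no real roots. *)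

theory Defs
  imports "HOL-Analysis.Analysis" "HOL-Library.Extended_Real"
begin

definition supp :: "real ^ 'n \<Rightarrow> 'n set" where
  "supp x = {i. x $ i \<noteq> 0}"

definition symmetric_mat :: "real ^ 'n ^ 'n \<Rightarrow> bool" where
  "symmetric_mat A \<longleftrightarrow> transpose A = A"

definition pos_def :: "real ^ 'n ^ 'n \<Rightarrow> bool" where
  "pos_def A \<longleftrightarrow> symmetric_mat A \<and> (\<forall>x. x \<noteq> 0 \<longrightarrow> x \<bullet> (A *v x) > 0)"

text \<open>Determinant of the principal submatrix X|_S (Leibniz formula over the index set S,
  which is literally how det is defined in HOL-Analysis, restricted to S).\<close>
definition principal_minor :: "real ^ 'n ^ 'n \<Rightarrow> 'n set \<Rightarrow> real" where
  "principal_minor X S =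
     (\<Sum>p \<in> {p. p permutes S}. of_int (sign p) * (\<Prod>i\<in>S. X $ i $ p i))"

definition lpm :: "nat \<Rightarrow> ('n set \<Rightarrow> real) \<Rightarrow> real ^ 'n ^ 'n \<Rightarrow> real" where
  "lpm k a X = (\<Sum>S \<in> {S. card S = k}. a S * principal_minor X S)"

definition is_lpm_poly :: "nat \<Rightarrow> ('n::finite set \<Rightarrow> real) \<Rightarrow> bool" where
  "is_lpm_poly k a \<longleftrightarrow> k \<le> CARD('n) \<and> (\<exists>X. symmetric_mat X \<and> lpm k a X \<noteq> 0)"

definition largest_root :: "(real \<Rightarrow> real) \<Rightarrow> ereal" where
  "largest_root g = (if {t. g t = 0} = {} then -\<infinity> else Sup (ereal ` {t. g t = 0}))"

definition qcqp_feasible :: "real ^ 'n ^ 'n \<Rightarrow> nat \<Rightarrow> real ^ 'n \<Rightarrow> bool" where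
  "qcqp_feasible A1 k x \<longleftrightarrow> x \<bullet> (A1 *v x) = 1 \<and> card (supp x) \<le> k"

end

theory Submission
  imports Defs
begin

lemma det_nz_of_pd:
  fixes P :: "real^'n::finite^'n"
  assumes "\<forall>x. x \<noteq> 0 \<longrightarrow> x \<bullet> (P *v x) > 0"
  shows "det P \<noteq> 0"
proof -
  have "\<forall>x. P *v x = 0 \<longrightarrow> x = 0"
    using assms by (metis inner_zero_right less_irrefl)
  then show ?thesis
    using invertible_det_nz invertible_left_inverse matrix_left_invertible_ker by blast
qed

lemma det_pos_of_pd:
  fixes P :: "real^'n::finite^'n"
  assumes pd: "\<forall>x. x \<noteq> 0 \<longrightarrow> x \<bullet> (P *v x) > 0"
  shows "det P > 0"
proof (rule ccontr)
  assume neg: "\<not> det P > 0"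
  define Q where "Q s = s *\<^sub>R P + (1 - s) *\<^sub>R (mat 1 :: real^'n^'n)" for s :: real
  have cont: "continuous_on {0..1} (\<lambda>s. det (Q s))"
    unfolding det_def Q_def
    by (intro continuous_intros)
  have "det (Q 1) \<le> 0" using neg by (simp add: Q_def)
  moreover have "0 \<le> det (Q 0)" by (simp add: Q_def)
  ultimately obtain s where s: "0 \<le> s" "s \<le> 1" "det (Q s) = 0"
    using IVT2'[of "\<lambda>s. det (Q s)" 1 0 0] cont by auto
  have "\<forall>x. x \<noteq> 0 \<longrightarrow> x \<bullet> (Q s *v x) > 0"
  proof (intro allI impI)
    fix x :: "real^'n" assume x: "x \<noteq> 0"
    have e: "x \<bullet> (Q s *v x) = s * (x \<bullet> (P *v x)) + (1 - s) * (x \<bullet> x)"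
      by (simp add: Q_def matrix_vector_mult_add_rdistrib scaleR_matrix_vector_assoc[symmetric] inner_add_right)
    have "x \<bullet> (P *v x) > 0" using pd x by blast
    moreover have "x \<bullet> x > 0" using x by simp
    ultimately have "0 < s * (x \<bullet> (P *v x)) \<or> 0 < (1 - s) * (x \<bullet> x)"
      "0 \<le> s * (x \<bullet> (P *v x))" "0 \<le> (1 - s) * (x \<bullet> x)"
      using s by (cases "s = 1"; auto)+
    then show "x \<bullet> (Q s *v x) > 0" unfolding e by linarith
  qed
  then show False using det_nz_of_pd s(3) by blast
qed

definition ext_mat :: "real^'n^'n \<Rightarrow> 'n set \<Rightarrow> real^'n^'n" where
  "ext_mat M S = (\<chi> i j. if i \<in> S \<and> j \<in> S then M $ i $ j else if i = j then 1 else 0)"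

lemma det_ext_mat:
  fixes M :: "real^'n::finite^'n"
  shows "det (ext_mat M S) = principal_minor M S"
proof -
  have "det (ext_mat M S) = (\<Sum>p \<in> {p. p permutes S}. of_int (sign p) * (\<Prod>i\<in>UNIV. ext_mat M S $ i $ p i))"
    unfolding det_def
  proof (rule sum.mono_neutral_right)
    show "finite {p. p permutes (UNIV::'n set)}" by (rule finite_permutations) simp
    show "{p. p permutes S} \<subseteq> {p. p permutes UNIV}" using permutes_subset by blast
    show "\<forall>p\<in>{p. p permutes UNIV} - {p. p permutes S}. of_int (sign p) * (\<Prod>i\<in>UNIV. ext_mat M S $ i $ p i) = 0"
    proof
      fix p assume p: "p \<in> {p. p permutes UNIV} - {p. p permutes S}"
      then have "\<exists>i. i \<notin> S \<and> p i \<noteq> i"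
        unfolding permutes_def by auto
      then obtain i where "i \<notin> S" "p i \<noteq> i" by blast
      then have "ext_mat M S $ i $ p i = 0" by (simp add: ext_mat_def)
      then show "of_int (sign p) * (\<Prod>i\<in>UNIV. ext_mat M S $ i $ p i) = 0"
        by (simp add: prod_zero_iff) blast
    qed
  qed
  also have "\<dots> = principal_minor M S"
    unfolding principal_minor_def
  proof (rule sum.cong[OF refl])
    fix p assume "p \<in> {p. p permutes S}"
    then have p: "p permutes S" by simp
    have "(\<Prod>i\<in>UNIV. ext_mat M S $ i $ p i) = (\<Prod>i\<in>S. ext_mat M S $ i $ p i) * (\<Prod>i\<in>UNIV - S. ext_mat M S $ i $ p i)"
      using prod.subset_diff[of S UNIV] by (simp add: mult.commute)
    also have "(\<Prod>i\<in>UNIV - S. ext_mat M S $ i $ p i) = 1"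
      using p by (intro prod.neutral) (auto simp: ext_mat_def permutes_not_in)
    also have "(\<Prod>i\<in>S. ext_mat M S $ i $ p i) = (\<Prod>i\<in>S. M $ i $ p i)"
      using p by (intro prod.cong) (auto simp: ext_mat_def permutes_in_image)
    finally show "of_int (sign p) * (\<Prod>i\<in>UNIV. ext_mat M S $ i $ p i) = of_int (sign p) * (\<Prod>i\<in>S. M $ i $ p i)"
      by simp
  qed
  finally show ?thesis .
qed

lemma quad_ext_mat:
  fixes M :: "real^'n::finite^'n"
  shows "x \<bullet> (ext_mat M S *v x) = (\<chi> i. if i \<in> S then x $ i else 0) \<bullet> (M *v (\<chi> i. if i \<in> S then x $ i else 0)) + (\<Sum>i\<in>UNIV - S. x $ i * x $ i)"
proof -
  define xS where "xS = (\<chi> i. if i \<in> S then x $ i else 0)"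
  have "x \<bullet> (ext_mat M S *v x) = (\<Sum>i\<in>UNIV. \<Sum>j\<in>UNIV. x $ i * ext_mat M S $ i $ j * x $ j)"
    by (simp add: inner_vec_def matrix_vector_mult_def sum_distrib_left mult.assoc)
  also have "\<dots> = (\<Sum>i\<in>UNIV. \<Sum>j\<in>UNIV. xS $ i * M $ i $ j * xS $ j + (if i = j \<and> i \<notin> S then x $ i * x $ j else 0))"
    by (intro sum.cong refl) (auto simp: xS_def ext_mat_def)
  also have "\<dots> = (\<Sum>i\<in>UNIV. \<Sum>j\<in>UNIV. xS $ i * M $ i $ j * xS $ j) + (\<Sum>i\<in>UNIV. \<Sum>j\<in>UNIV. (if i = j \<and> i \<notin> S then x $ i * x $ j else 0))"
    by (simp add: sum.distrib)
  also have "(\<Sum>i\<in>UNIV. \<Sum>j\<in>UNIV. xS $ i * M $ i $ j * xS $ j) = xS \<bullet> (M *v xS)"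
    by (simp add: inner_vec_def matrix_vector_mult_def sum_distrib_left mult.assoc)
  also have "(\<Sum>i\<in>UNIV. \<Sum>j\<in>UNIV. (if i = j \<and> i \<notin> S then x $ i * x $ j else 0)) = (\<Sum>i\<in>UNIV. if i \<notin> S then x $ i * x $ i else 0)"
    by (intro sum.cong refl) (auto simp: sum.delta)
  also have "\<dots> = (\<Sum>i\<in>UNIV - S. x $ i * x $ i)"
    by (simp add: sum.If_cases Diff_eq Collect_neg_eq)
  finally show ?thesis unfolding xS_def .
qed

lemma principal_minor_pos:
  fixes M :: "real^'n::finite^'n"
  assumes pd: "\<forall>x. x \<noteq> 0 \<and> supp x \<subseteq> S \<longrightarrow> x \<bullet> (M *v x) > 0"
  shows "principal_minor M S > 0"
proof -
  have "\<forall>x. x \<noteq> 0 \<longrightarrow> x \<bullet> (ext_mat M S *v x) > 0"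
  proof (intro allI impI)
    fix x :: "real^'n" assume x: "x \<noteq> 0"
    define xS where "xS = (\<chi> i. if i \<in> S then x $ i else 0)"
    have e: "x \<bullet> (ext_mat M S *v x) = xS \<bullet> (M *v xS) + (\<Sum>i\<in>UNIV - S. x $ i * x $ i)"
      unfolding xS_def by (rule quad_ext_mat)
    have nn: "(\<Sum>i\<in>UNIV - S. x $ i * x $ i) \<ge> 0" by (intro sum_nonneg) simp
    show "x \<bullet> (ext_mat M S *v x) > 0"
    proof (cases "xS = 0")
      case True
      then have "\<forall>i\<in>S. x $ i = 0" by (auto simp: xS_def vec_eq_iff split: if_splits)
      moreover obtain j where "x $ j \<noteq> 0" using x by (auto simp: vec_eq_iff)
      ultimately have "j \<in> UNIV - S" by auto
      then have "(\<Sum>i\<in>UNIV - S. x $ i * x $ i) > 0"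
        using \<open>x $ j \<noteq> 0\<close> by (intro sum_pos2[of _ j]) (auto, smt (verit) mult_pos_pos mult_neg_neg)
      then show ?thesis using e True by simp
    next
      case False
      have "supp xS \<subseteq> S" by (auto simp: supp_def xS_def)
      then have "xS \<bullet> (M *v xS) > 0" using pd False by blast
      then show ?thesis using e nn by simp
    qed
  qed
  then have "det (ext_mat M S) > 0" by (rule det_pos_of_pd)
  then show ?thesis by (simp add: det_ext_mat)
qed
lemma quad_scale:
  fixes A :: "real^'n::finite^'n"
  shows "(c *\<^sub>R x) \<bullet> (A *v (c *\<^sub>R x)) = c^2 * (x \<bullet> (A *v x))"
  by (simp add: matrix_vector_mult_scaleR power2_eq_square)

lemma pd_lower_bound:
  fixes A :: "real^'n::finite^'n"
  assumes pd: "\<forall>x. x \<noteq> 0 \<longrightarrow> x \<bullet> (A *v x) > 0"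
  shows "\<exists>c>0. \<forall>x. c * (norm x)^2 \<le> x \<bullet> (A *v x)"
proof -
  have cont: "continuous_on (sphere 0 1) (\<lambda>x::real^'n. x \<bullet> (A *v x))"
    by (intro continuous_intros)
  obtain u where u: "u \<in> sphere 0 1" "\<forall>y\<in>sphere 0 1. u \<bullet> (A *v u) \<le> y \<bullet> (A *v y)"
    using continuous_attains_inf[OF compact_sphere _ cont] by auto
  have "u \<noteq> 0" using u(1) by auto
  then have cpos: "u \<bullet> (A *v u) > 0" using pd by blast
  show ?thesis
  proof (intro exI conjI allI)
    show "u \<bullet> (A *v u) > 0" by (rule cpos)
    fix x :: "real^'n"
    show "u \<bullet> (A *v u) * (norm x)^2 \<le> x \<bullet> (A *v x)"
    proof (cases "x = 0")
      case True then show ?thesis by simp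
    next
      case False
      define y where "y = (1 / norm x) *\<^sub>R x"
      have "y \<in> sphere 0 1" using False by (simp add: y_def)
      then have "u \<bullet> (A *v u) \<le> y \<bullet> (A *v y)" using u by blast
      also have "y \<bullet> (A *v y) = (1 / norm x)^2 * (x \<bullet> (A *v x))"
        unfolding y_def by (rule quad_scale)
      finally have "u \<bullet> (A *v u) * (norm x)^2 \<le> (1 / norm x)^2 * (x \<bullet> (A *v x)) * (norm x)^2"
        by (simp add: mult_right_mono)
      also have "\<dots> = x \<bullet> (A *v x)" using False by (simp add: field_simps)
      finally show ?thesis .
    qed
  qed
qed

lemma feasible_compact:
  fixes A1 :: "real^'n::finite^'n"
  assumes "pos_def A1"
  shows "compact {x. qcqp_feasible A1 k x}"
proof -
  obtain c where c: "c > 0" "\<forall>x. c * (norm x)^2 \<le> x \<bullet> (A1 *v x)"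
    using pd_lower_bound assms unfolding pos_def_def by blast
  have bnd: "bounded {x. qcqp_feasible A1 k x}"
  proof -
    have "norm x \<le> sqrt (1 / c)" if "qcqp_feasible A1 k x" for x
    proof -
      have "c * (norm x)^2 \<le> 1" using c that by (metis qcqp_feasible_def)
      then have "(norm x)^2 \<le> 1 / c" using c by (simp add: field_simps)
      then show ?thesis by (simp add: real_le_rsqrt)
    qed
    then show ?thesis unfolding bounded_iff by blast
  qed
  have eq: "{x. qcqp_feasible A1 k x} =
      (\<Union>T\<in>{T. card T \<le> k}. {x. x \<bullet> (A1 *v x) = 1} \<inter> {x. \<forall>i. i \<notin> T \<longrightarrow> x $ i = 0})"
  proof (intro set_eqI iffI)
    fix x assume "x \<in> {x. qcqp_feasible A1 k x}"
    then show "x \<in> (\<Union>T\<in>{T. card T \<le> k}. {x. x \<bullet> (A1 *v x) = 1} \<inter> {x. \<forall>i. i \<notin> T \<longrightarrow> x $ i = 0})"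
      by (auto simp: qcqp_feasible_def supp_def intro!: bexI[of _ "supp x"])
  next
    fix x assume "x \<in> (\<Union>T\<in>{T. card T \<le> k}. {x. x \<bullet> (A1 *v x) = 1} \<inter> {x. \<forall>i. i \<notin> T \<longrightarrow> x $ i = 0})"
    then obtain T where T: "card T \<le> k" "x \<bullet> (A1 *v x) = 1" "\<forall>i. i \<notin> T \<longrightarrow> x $ i = 0" by auto
    then have "supp x \<subseteq> T" by (auto simp: supp_def)
    then have "card (supp x) \<le> card T" by (intro card_mono) auto
    then show "x \<in> {x. qcqp_feasible A1 k x}" using T by (simp add: qcqp_feasible_def)
  qed
  have cl: "closed {x. qcqp_feasible A1 k x}"
    unfolding eq
  proof (intro closed_UN ballI closed_Int)
    show "finite {T::'n set. card T \<le> k}" by (rule finite_subset[of _ UNIV]) auto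
    show "closed {x::real^'n. x \<bullet> (A1 *v x) = 1}"
      by (intro closed_Collect_eq continuous_intros)
    fix T :: "'n set"
    show "closed {x::real^'n. \<forall>i. i \<notin> T \<longrightarrow> x $ i = 0}"
      by (intro closed_Collect_all closed_Collect_imp closed_Collect_eq continuous_intros) auto
  qed
  show ?thesis using bnd cl by (simp add: compact_eq_bounded_closed)
qed

theorem mainTheorem1:
  fixes A0 A1 :: "real ^ 'n::finite ^ 'n" and k :: nat and a :: "'n set \<Rightarrow> real"
  assumes "k \<le> CARD('n)"
    and "symmetric_mat A0" and "pos_def A1"
    and "is_lpm_poly k a"
    and "\<forall>S. card S = k \<longrightarrow> a S \<ge> 0"
  defines "g \<equiv> (\<lambda>t::real. lpm k a (t *\<^sub>R A1 - A0))"
  shows "(largest_root g = -\<infinity> \<or>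
           (\<exists>x. qcqp_feasible A1 k x \<and> largest_root g \<le> ereal (x \<bullet> (A0 *v x))))
         \<and> largest_root g \<le> (SUP x \<in> {x. qcqp_feasible A1 k x}. ereal (x \<bullet> (A0 *v x)))"
proof -
  let ?F = "{x. qcqp_feasible A1 k x}"
  have q1pos: "\<And>x. x \<noteq> 0 \<Longrightarrow> x \<bullet> (A1 *v x) > 0" using assms(3) by (simp add: pos_def_def)
  have finS: "finite {S::'n set. card S = k}" by (rule finite_subset[of _ UNIV]) auto
  obtain S0 where S0: "card S0 = k" "a S0 > 0"
  proof -
    obtain X where X: "lpm k a X \<noteq> 0" using assms(4) unfolding is_lpm_poly_def by blast
    then obtain S where "S \<in> {S. card S = k}" "a S * principal_minor X S \<noteq> 0"
      unfolding lpm_def by (meson sum.neutral)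
    then show ?thesis using that assms(5) by (metis mem_Collect_eq mult_eq_0_iff order_le_less)
  qed
  have key: "\<exists>y\<in>?F. r \<le> y \<bullet> (A0 *v y)" if gr: "g r = 0" for r
  proof (rule ccontr)
    assume "\<not> (\<exists>y\<in>?F. r \<le> y \<bullet> (A0 *v y))"
    then have lt: "\<And>y. qcqp_feasible A1 k y \<Longrightarrow> y \<bullet> (A0 *v y) < r" by force
    have pm: "principal_minor (r *\<^sub>R A1 - A0) S > 0" if S: "card S = k" for S
    proof (rule principal_minor_pos, intro allI impI)
      fix x :: "real^'n" assume x: "x \<noteq> 0 \<and> supp x \<subseteq> S"
      define c where "c = x \<bullet> (A1 *v x)"
      have c: "c > 0" using q1pos x c_def by blast
      define y where "y = (1 / sqrt c) *\<^sub>R x"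
      have "y \<bullet> (A1 *v y) = (1 / sqrt c)^2 * c" unfolding y_def c_def by (rule quad_scale)
      also have "\<dots> = 1" using c by (simp add: power_divide)
      finally have y1: "y \<bullet> (A1 *v y) = 1" .
      have "supp y = supp x" using c by (simp add: y_def supp_def)
      then have "card (supp y) \<le> k" using x S by (metis card_mono finite)
      then have "y \<bullet> (A0 *v y) < r" using lt y1 by (simp add: qcqp_feasible_def)
      moreover have "y \<bullet> (A0 *v y) = (1 / sqrt c)^2 * (x \<bullet> (A0 *v x))" unfolding y_def by (rule quad_scale)
      ultimately have "x \<bullet> (A0 *v x) / c < r" using c by (simp add: power_divide)
      then have "x \<bullet> (A0 *v x) < r * c" using c by (simp add: field_simps)
      moreover have "x \<bullet> ((r *\<^sub>R A1 - A0) *v x) = r * c - x \<bullet> (A0 *v x)"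
        by (simp add: c_def matrix_vector_mult_diff_rdistrib scaleR_matrix_vector_assoc[symmetric] inner_diff_right)
      ultimately show "x \<bullet> ((r *\<^sub>R A1 - A0) *v x) > 0" by simp
    qed
    have "g r > 0"
      unfolding g_def lpm_def
    proof (rule sum_pos2[OF finS, of S0])
      show "S0 \<in> {S. card S = k}" using S0 by simp
      show "0 < a S0 * principal_minor (r *\<^sub>R A1 - A0) S0" using S0 pm by simp
      fix S :: "'n set" assume "S \<in> {S. card S = k}"
      then show "0 \<le> a S * principal_minor (r *\<^sub>R A1 - A0) S"
        using pm assms(5) by (simp add: less_imp_le)
    qed
    then show False using gr by simp
  qed
  show ?thesis
  proof (cases "{t. g t = 0} = {}")
    case True
    then show ?thesis by (simp add: largest_root_def)
  next
    case False
    then obtain r where "g r = 0" by auto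
    then obtain y0 where "y0 \<in> ?F" using key by blast
    then have Fne: "?F \<noteq> {}" by blast
    have cont: "continuous_on ?F (\<lambda>x. x \<bullet> (A0 *v x))" by (intro continuous_intros)
    obtain xm where xm: "xm \<in> ?F" "\<forall>y\<in>?F. y \<bullet> (A0 *v y) \<le> xm \<bullet> (A0 *v xm)"
      using continuous_attains_sup[OF feasible_compact[OF assms(3)] Fne cont] by blast
    have lr: "largest_root g \<le> ereal (xm \<bullet> (A0 *v xm))"
      unfolding largest_root_def using False
    proof (simp, intro Sup_least)
      fix z assume "z \<in> ereal ` {t. g t = 0}"
      then obtain t where t: "z = ereal t" "g t = 0" by auto
      then obtain y where "y \<in> ?F" "t \<le> y \<bullet> (A0 *v y)" using key by blast
      then show "z \<le> ereal (xm \<bullet> (A0 *v xm))" using t xm by force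
    qed
    have "ereal (xm \<bullet> (A0 *v xm)) \<le> (SUP x \<in> ?F. ereal (x \<bullet> (A0 *v x)))"
      using xm(1) by (rule SUP_upper)
    then show ?thesis using lr xm(1) by (auto intro: order_trans)
  qed
qed

end
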